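(* Let $\mathcal{N}_{A,n}$ be the number of vertices of $\mathcal{T}_n$ at distance $D_n$ from $(0,0)$. Then $\mathcal{N}_{A,1}=3$, $\mathcal{N}_{A,2}=9$, and for $n>2$, $\mathcal{N}_{A,n}=6$ if $n$ is odd and $\mathcal{N}_{A,n}=12$ if $n$ is even.
   Context: For $n\in\mathbb{N}$ let $G_n=\mathbb{Z}_{2^n}\times\mathbb{Z}_{2^n}$ (additive group). Let $S=\{\pm(1,0),\pm(0,1),\pm(1,1)\}$. The undirected graph $\mathcal{T}_n$ is the Cayley graph $\Gamma(G_n,S)$: vertex set $G_n$, each vertex $u$ adjacent to $u+s$ for every $s\in S$ (arithmetic modulo $2^n$). $D_n$ denotes the diameter of $\mathcal{T}_n$ (maximum over pairs of vertices of shortest-path length). *)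

theory Defs
  imports Main
begin

text \<open>The torus group G_n = Z_{2^n} x Z_{2^n}, represented by integer pairs with
  coordinates in {0..<2^n}; arithmetic is modulo 2^n.\<close>

definition tri_vertices :: "nat \<Rightarrow> (int \<times> int) set" where
  "tri_vertices n = {0..<2^n} \<times> {0..<2^n}"

definition tri_gens :: "(int \<times> int) set" where
  "tri_gens = {(1,0), (-1,0), (0,1), (0,-1), (1,1), (-1,-1)}"

definition tri_add :: "nat \<Rightarrow> int \<times> int \<Rightarrow> int \<times> int \<Rightarrow> int \<times> int" where
  "tri_add n u s = ((fst u + fst s) mod 2^n, (snd u + snd s) mod 2^n)"

definition tri_adj :: "nat \<Rightarrow> int \<times> int \<Rightarrow> int \<times> int \<Rightarrow> bool" where
  "tri_adj n u v \<longleftrightarrow> (\<exists>s\<in>tri_gens. v = tri_add n u s)"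

inductive walk :: "nat \<Rightarrow> nat \<Rightarrow> int \<times> int \<Rightarrow> int \<times> int \<Rightarrow> bool" for n where
  walk_nil: "walk n 0 u u"
| walk_step: "walk n k u v \<Longrightarrow> tri_adj n v w \<Longrightarrow> walk n (Suc k) u w"

text \<open>Shortest-path distance (the graph is connected).\<close>
definition tri_dist :: "nat \<Rightarrow> int \<times> int \<Rightarrow> int \<times> int \<Rightarrow> nat" where
  "tri_dist n u v = (LEAST k. walk n k u v)"

definition tri_diam :: "nat \<Rightarrow> nat" where
  "tri_diam n = Max {tri_dist n u v | u v. u \<in> tri_vertices n \<and> v \<in> tri_vertices n}"

definition N_A :: "nat \<Rightarrow> nat" where
  "N_A n = card {v \<in> tri_vertices n. tri_dist n (0,0) v = tri_diam n}"

end

theory Submission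
  imports Defs
begin

definition hn :: "int \<Rightarrow> int \<Rightarrow> int" where
  "hn a b = max \<bar>a\<bar> (max \<bar>b\<bar> \<bar>a - b\<bar>)"

lemma hn_step: "s \<in> tri_gens \<Longrightarrow> hn (a + fst s) (b + snd s) \<le> hn a b + 1"
  unfolding tri_gens_def hn_def by auto

lemma hn_decomp:
  assumes "hn a b = int (Suc m)"
  shows "\<exists>s\<in>tri_gens. hn (a - fst s) (b - snd s) = int m"
proof -
  have c: "(a>0 \<and> b>0) \<or> (a>0 \<and> b\<le>0) \<or> (a\<le>0 \<and> b>0) \<or> (a<0 \<and> b<0) \<or> (a=0 \<and> b<0) \<or> (a<0 \<and> b=0) \<or> (a=0 \<and> b=0)"
    by arith
  show ?thesis
  proof -
    { assume h: "a>0 \<and> b>0"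
      have "hn (a - 1) (b - 1) = int m" using assms h unfolding hn_def by (auto simp: max_def abs_if split: if_splits)
      hence ?thesis by (intro bexI[of _ "(1,1)"]) (auto simp: tri_gens_def) }
    moreover
    { assume h: "a>0 \<and> b\<le>0"
      have "hn (a - 1) (b - 0) = int m" using assms h unfolding hn_def by (auto simp: max_def abs_if split: if_splits)
      hence ?thesis by (intro bexI[of _ "(1,0)"]) (auto simp: tri_gens_def) }
    moreover
    { assume h: "a\<le>0 \<and> b>0"
      have "hn (a - 0) (b - 1) = int m" using assms h unfolding hn_def by (auto simp: max_def abs_if split: if_splits)
      hence ?thesis by (intro bexI[of _ "(0,1)"]) (auto simp: tri_gens_def) }
    moreover
    { assume h: "a<0 \<and> b<0"
      have "hn (a - -1) (b - -1) = int m" using assms h unfolding hn_def by (auto simp: max_def abs_if split: if_splits)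
      hence ?thesis by (intro bexI[of _ "(-1,-1)"]) (auto simp: tri_gens_def) }
    moreover
    { assume h: "a=0 \<and> b<0"
      have "hn (a - 0) (b - -1) = int m" using assms h unfolding hn_def by (auto simp: max_def abs_if split: if_splits)
      hence ?thesis by (intro bexI[of _ "(0,-1)"]) (auto simp: tri_gens_def) }
    moreover
    { assume h: "a<0 \<and> b=0"
      have "hn (a - -1) (b - 0) = int m" using assms h unfolding hn_def by (auto simp: max_def abs_if split: if_splits)
      hence ?thesis by (intro bexI[of _ "(-1,0)"]) (auto simp: tri_gens_def) }
    moreover
    { assume h: "a=0 \<and> b=0"
      hence ?thesis using assms unfolding hn_def by simp }
    ultimately show ?thesis using c by blast
  qed
qed

lemma walk_imp:
  "walk n k u v \<Longrightarrow> \<exists>a b. hn a b \<le> int k \<and> fst v mod 2^n = (fst u + a) mod 2^n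
      \<and> snd v mod 2^n = (snd u + b) mod 2^n"
proof (induction rule: walk.induct)
  case (walk_nil u)
  show ?case by (rule exI[of _ 0], rule exI[of _ 0]) (simp add: hn_def)
next
  case (walk_step k u v w)
  then obtain a b where ab: "hn a b \<le> int k" "fst v mod 2^n = (fst u + a) mod 2^n"
      "snd v mod 2^n = (snd u + b) mod 2^n" by blast
  from walk_step.hyps(2) obtain s where s: "s \<in> tri_gens" "w = tri_add n v s"
    by (auto simp: tri_adj_def)
  have 1: "hn (a + fst s) (b + snd s) \<le> int (Suc k)" using hn_step[OF s(1), of a b] ab by simp
  have "fst w mod 2^n = (fst v + fst s) mod 2^n" by (simp add: s(2) tri_add_def)
  also have "\<dots> = (fst v mod 2^n + fst s) mod 2^n" by (simp add: mod_add_left_eq)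
  also have "\<dots> = ((fst u + a) mod 2^n + fst s) mod 2^n" using ab by simp
  also have "\<dots> = (fst u + (a + fst s)) mod 2^n" by (simp add: mod_add_left_eq add.assoc)
  finally have 2: "fst w mod 2^n = (fst u + (a + fst s)) mod 2^n" .
  have "snd w mod 2^n = (snd v + snd s) mod 2^n" by (simp add: s(2) tri_add_def)
  also have "\<dots> = (snd v mod 2^n + snd s) mod 2^n" by (simp add: mod_add_left_eq)
  also have "\<dots> = ((snd u + b) mod 2^n + snd s) mod 2^n" using ab by simp
  also have "\<dots> = (snd u + (b + snd s)) mod 2^n" by (simp add: mod_add_left_eq add.assoc)
  finally have 3: "snd w mod 2^n = (snd u + (b + snd s)) mod 2^n" .
  show ?case using 1 2 3 by blast
qed

lemma walk_exists:
  "u \<in> tri_vertices n \<Longrightarrow> hn a b = int m \<Longrightarrow>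
    walk n m u ((fst u + a) mod 2^n, (snd u + b) mod 2^n)"
proof (induction m arbitrary: a b)
  case 0
  then have ab: "a = 0" "b = 0" by (auto simp: hn_def)
  have "fst u mod 2^n = fst u" "snd u mod 2^n = snd u" using 0(1) by (auto simp: tri_vertices_def)
  then have "((fst u + a) mod 2^n, (snd u + b) mod 2^n) = u" using ab by simp
  then show ?case using walk_nil by metis
next
  case (Suc m)
  obtain s where s: "s \<in> tri_gens" "hn (a - fst s) (b - snd s) = int m"
    using hn_decomp[OF Suc.prems(2)] by blast
  have w: "walk n m u ((fst u + (a - fst s)) mod 2^n, (snd u + (b - snd s)) mod 2^n)"
    using Suc.IH[OF Suc.prems(1) s(2)] .
  have "tri_add n ((fst u + (a - fst s)) mod 2^n, (snd u + (b - snd s)) mod 2^n) s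
      = ((fst u + a) mod 2^n, (snd u + b) mod 2^n)"
    by (simp add: tri_add_def mod_add_left_eq)
  then have "tri_adj n ((fst u + (a - fst s)) mod 2^n, (snd u + (b - snd s)) mod 2^n)
      ((fst u + a) mod 2^n, (snd u + b) mod 2^n)"
    using s(1) unfolding tri_adj_def by metis
  then show ?case using walk_step[OF w] by simp
qed

definition T :: "int \<Rightarrow> int \<Rightarrow> int \<Rightarrow> int" where
  "T N x y = min (max x y) (min (N - x + y) (min (N + x - y) (max (N-x) (max (N-y) \<bar>x-y\<bar>))))"

lemma modrep:
  fixes a N :: int
  assumes "0 < N" "-N < a" "a < N" "a mod N = x"
  shows "a = x \<or> a = x - N"
proof (cases "0 \<le> a")
  case True then have "a mod N = a" using assms by simp
  then show ?thesis using assms by simp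
next
  case False
  have "a mod N = (a + N) mod N" by simp
  also have "\<dots> = a + N" using False assms by (intro mod_pos_pos_trivial) auto
  finally show ?thesis using assms by simp
qed

lemma T_le4: "T N x y \<le> max x y" "T N x y \<le> N - x + y" "T N x y \<le> N + x - y"
  "T N x y \<le> max (N-x) (max (N-y) \<bar>x-y\<bar>)"
  unfolding T_def by (simp_all add: min_le_iff_disj)

lemma hn_cands:
  assumes "0 \<le> x" "x < N" "0 \<le> y" "y < N"
  shows "hn x y = max x y" "hn (x - N) y = N - x + y" "hn x (y - N) = N + x - y"
    "hn (x - N) (y - N) = max (N-x) (max (N-y) \<bar>x-y\<bar>)"
  using assms unfolding hn_def by (auto simp: max_def abs_if)

lemma T_le_N: "0 \<le> x \<Longrightarrow> x < N \<Longrightarrow> 0 \<le> y \<Longrightarrow> y < N \<Longrightarrow> T N x y \<le> N"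
  using T_le4(4)[of N x y] by (auto simp: max_def abs_if split: if_splits)

lemma T_le_rep:
  assumes "0 \<le> x" "x < N" "0 \<le> y" "y < N" "a mod N = x" "b mod N = y"
  shows "T N x y \<le> hn a b"
proof (cases "\<bar>a\<bar> < N \<and> \<bar>b\<bar> < N")
  case False then have "N \<le> hn a b" by (auto simp: hn_def)
  moreover have "T N x y \<le> N" using assms T_le_N by blast
  ultimately show ?thesis by linarith
next
  case True
  have "a = x \<or> a = x - N" using modrep[of N a x] True assms by auto
  moreover have "b = y \<or> b = y - N" using modrep[of N b y] True assms by auto
  ultimately show ?thesis using hn_cands[OF assms(1-4)] T_le4[of N x y] by auto
qed

lemma T_attained:
  assumes "0 \<le> x" "x < N" "0 \<le> y" "y < N"
  shows "\<exists>a b. hn a b = T N x y \<and> (a = x \<or> a = x - N) \<and> (b = y \<or> b = y - N)"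
proof -
  note 1 = hn_cands[OF assms]
  have "T N x y = hn x y \<or> T N x y = hn (x - N) y \<or> T N x y = hn x (y - N) \<or> T N x y = hn (x - N) (y - N)"
    unfolding 1 T_def by (simp add: min_def)
  then show ?thesis by metis
qed

lemma dist_eq:
  assumes u: "u \<in> tri_vertices n" and v: "v \<in> tri_vertices n"
  shows "int (tri_dist n u v) = T (2^n) ((fst v - fst u) mod 2^n) ((snd v - snd u) mod 2^n)"
proof -
  define N :: int where "N = 2^n"
  have N: "0 < N" by (simp add: N_def)
  define x where "x = (fst v - fst u) mod N"
  define y where "y = (snd v - snd u) mod N"
  have xy: "0 \<le> x" "x < N" "0 \<le> y" "y < N" using N by (auto simp: x_def y_def)
  have uv: "fst u mod N = fst u" "snd u mod N = snd u" "fst v mod N = fst v" "snd v mod N = snd v"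
    using u v by (auto simp: tri_vertices_def N_def)
  obtain a b where ab: "hn a b = T N x y" "a = x \<or> a = x - N" "b = y \<or> b = y - N"
    using T_attained[OF xy] by blast
  have T0: "0 \<le> T N x y" using ab(1) by (auto simp: hn_def)
  have "(fst u + a) mod N = (fst u + x) mod N" using ab(2) by (auto simp add: add_diff_eq minus_mod_self2)
  also have "\<dots> = (fst u + (fst v - fst u)) mod N" unfolding x_def by (simp add: mod_add_right_eq)
  also have "\<dots> = fst v" using uv by simp
  finally have e1: "(fst u + a) mod N = fst v" .
  have "(snd u + b) mod N = (snd u + y) mod N" using ab(3) by (auto simp add: add_diff_eq minus_mod_self2)
  also have "\<dots> = (snd u + (snd v - snd u)) mod N" unfolding y_def by (simp add: mod_add_right_eq)
  also have "\<dots> = snd v" using uv by simp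
  finally have e2: "(snd u + b) mod N = snd v" .
  have "hn a b = int (nat (T N x y))" using ab(1) T0 by simp
  from walk_exists[OF u this] e1 e2 have W: "walk n (nat (T N x y)) u v"
    by (simp add: N_def)
  have lo: "T N x y \<le> int k" if wk: "walk n k u v" for k
  proof -
    obtain a' b' where a'b': "hn a' b' \<le> int k" "fst v mod 2^n = (fst u + a') mod 2^n"
        "snd v mod 2^n = (snd u + b') mod 2^n" using walk_imp[OF wk] by blast
    have "a' mod N = ((fst u + a') - fst u) mod N" by simp
    also have "\<dots> = ((fst u + a') mod N - fst u) mod N" by (simp add: mod_diff_left_eq)
    also have "\<dots> = x" unfolding x_def N_def by (metis a'b'(2) mod_diff_left_eq)
    finally have 1: "a' mod N = x" .
    have "b' mod N = ((snd u + b') - snd u) mod N" by simp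
    also have "\<dots> = ((snd u + b') mod N - snd u) mod N" by (simp add: mod_diff_left_eq)
    also have "\<dots> = y" unfolding y_def N_def by (metis a'b'(3) mod_diff_left_eq)
    finally have 2: "b' mod N = y" .
    show ?thesis using T_le_rep[OF xy 1 2] a'b'(1) by linarith
  qed
  have L1: "tri_dist n u v \<le> nat (T N x y)" unfolding tri_dist_def using W by (rule Least_le)
  have "walk n (tri_dist n u v) u v" unfolding tri_dist_def using W by (rule LeastI)
  then have L2: "T N x y \<le> int (tri_dist n u v)" by (rule lo)
  show ?thesis using L1 L2 T0 unfolding N_def x_def y_def by linarith
qed

lemma T_ge: "D \<le> T N x y \<longleftrightarrow> D \<le> max x y \<and> D \<le> N-x+y \<and> D \<le> N+x-y \<and> D \<le> max (N-x) (max (N-y) \<bar>x-y\<bar>)"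
  by (simp add: T_def)

lemma T_bound:
  assumes "0 \<le> x" "x < N" "0 \<le> y" "y < N"
  shows "3 * T N x y \<le> 2 * N"
  using T_le4[of N x y] assms by (auto simp: max_def abs_if split: if_splits)

lemma char_odd:
  assumes N: "N = 3*q+2" "q \<ge> 1" and r: "0 \<le> x" "x < N" "0 \<le> y" "y < N"
  shows "T N x y = 2*q+1 \<longleftrightarrow> (x,y) \<in> {(q,2*q+1),(q+1,2*q+1),(q+1,2*q+2),(2*q+1,q),(2*q+1,q+1),(2*q+2,q+1)}"
proof
  assume h: "T N x y = 2*q+1"
  then have g: "2*q+1 \<le> max x y" "2*q+1 \<le> N-x+y" "2*q+1 \<le> N+x-y" "2*q+1 \<le> max (N-x) (max (N-y) \<bar>x-y\<bar>)"
    using T_ge[of "2*q+1" N x y] by auto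
  show "(x,y) \<in> {(q,2*q+1),(q+1,2*q+1),(q+1,2*q+2),(2*q+1,q),(2*q+1,q+1),(2*q+2,q+1)}"
  proof (cases "x \<le> y")
    case True
    then have "2*q+1 \<le> y" "2*q+1 \<le> N-x \<or> 2*q+1 \<le> y-x" using g by (auto simp: max_def abs_if split: if_splits)
    then have "(x = q \<and> y = 2*q+1) \<or> (x = q+1 \<and> y = 2*q+1) \<or> (x = q+1 \<and> y = 2*q+2)"
      using N r g(3) True by arith
    then show ?thesis by auto
  next
    case False
    then have "2*q+1 \<le> x" "2*q+1 \<le> N-y \<or> 2*q+1 \<le> x-y" using g by (auto simp: max_def abs_if split: if_splits)
    then have "(y = q \<and> x = 2*q+1) \<or> (y = q+1 \<and> x = 2*q+1) \<or> (y = q+1 \<and> x = 2*q+2)"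
      using N r g(2) False by arith
    then show ?thesis by auto
  qed
next
  assume "(x,y) \<in> {(q,2*q+1),(q+1,2*q+1),(q+1,2*q+2),(2*q+1,q),(2*q+1,q+1),(2*q+2,q+1)}"
  then have "2*q+1 \<le> T N x y" using N unfolding T_ge by (auto simp: le_max_iff_disj)
  moreover have "3 * T N x y \<le> 2 * N" using T_bound r by blast
  ultimately show "T N x y = 2*q+1" using N by linarith
qed

lemma char_even:
  assumes N: "N = 3*q+1" "q \<ge> 2" and r: "0 \<le> x" "x < N" "0 \<le> y" "y < N"
  shows "T N x y = 2*q \<longleftrightarrow> (x,y) \<in> {(q-1,2*q),(q,2*q),(q,2*q+1),(q+1,2*q),(q+1,2*q+1),(q+1,2*q+2),
     (2*q,q-1),(2*q,q),(2*q+1,q),(2*q,q+1),(2*q+1,q+1),(2*q+2,q+1)}"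
proof
  assume h: "T N x y = 2*q"
  then have g: "2*q \<le> max x y" "2*q \<le> N-x+y" "2*q \<le> N+x-y" "2*q \<le> max (N-x) (max (N-y) \<bar>x-y\<bar>)"
    using T_ge[of "2*q" N x y] by auto
  show "(x,y) \<in> {(q-1,2*q),(q,2*q),(q,2*q+1),(q+1,2*q),(q+1,2*q+1),(q+1,2*q+2),
     (2*q,q-1),(2*q,q),(2*q+1,q),(2*q,q+1),(2*q+1,q+1),(2*q+2,q+1)}"
  proof (cases "x \<le> y")
    case True
    then have "2*q \<le> y" "2*q \<le> N-x \<or> 2*q \<le> y-x" using g by (auto simp: max_def abs_if split: if_splits)
    then have "(x = q-1 \<and> y = 2*q) \<or> (x = q \<and> y = 2*q) \<or> (x = q \<and> y = 2*q+1) \<or>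
        (x = q+1 \<and> y = 2*q) \<or> (x = q+1 \<and> y = 2*q+1) \<or> (x = q+1 \<and> y = 2*q+2)"
      using N r g(3) True by arith
    then show ?thesis by auto
  next
    case False
    then have "2*q \<le> x" "2*q \<le> N-y \<or> 2*q \<le> x-y" using g by (auto simp: max_def abs_if split: if_splits)
    then have "(y = q-1 \<and> x = 2*q) \<or> (y = q \<and> x = 2*q) \<or> (y = q \<and> x = 2*q+1) \<or>
        (y = q+1 \<and> x = 2*q) \<or> (y = q+1 \<and> x = 2*q+1) \<or> (y = q+1 \<and> x = 2*q+2)"
      using N r g(2) False by arith
    then show ?thesis by auto
  qed
next
  assume "(x,y) \<in> {(q-1,2*q),(q,2*q),(q,2*q+1),(q+1,2*q),(q+1,2*q+1),(q+1,2*q+2),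
     (2*q,q-1),(2*q,q),(2*q+1,q),(2*q,q+1),(2*q+1,q+1),(2*q+2,q+1)}"
  then have "2*q \<le> T N x y" using N unfolding T_ge by (auto simp: le_max_iff_disj)
  moreover have "3 * T N x y \<le> 2 * N" using T_bound r by blast
  ultimately show "T N x y = 2*q" using N by linarith
qed

lemma char_2:
  assumes r: "0 \<le> x" "x < 2" "0 \<le> y" "y < 2"
  shows "T 2 x y = 1 \<longleftrightarrow> (x,y) \<in> {(0,1),(1,0),(1,1)}"
proof -
  have "x = 0 \<or> x = 1" "y = 0 \<or> y = 1" using r by arith+
  then show ?thesis by (elim disjE; simp add: T_def)
qed

lemma char_4:
  assumes r: "0 \<le> x" "x < 4" "0 \<le> y" "y < 4"
  shows "T 4 x y = 2 \<longleftrightarrow> (x,y) \<in> {(0,2),(1,2),(1,3),(2,0),(2,1),(2,2),(2,3),(3,1),(3,2)}"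
proof -
  have "x = 0 \<or> x = 1 \<or> x = 2 \<or> x = 3" "y = 0 \<or> y = 1 \<or> y = 2 \<or> y = 3" using r by arith+
  then show ?thesis by (elim disjE; simp add: T_def)
qed

lemma NA_gen:
  fixes D :: nat and S :: "(int \<times> int) set"
  assumes bound: "\<And>x y. 0\<le>x \<Longrightarrow> x<2^n \<Longrightarrow> 0\<le>y \<Longrightarrow> y<2^n \<Longrightarrow> T (2^n) x y \<le> int D"
    and wit: "(xw,yw) \<in> S"
    and char: "\<And>x y. 0\<le>x \<Longrightarrow> x<2^n \<Longrightarrow> 0\<le>y \<Longrightarrow> y<2^n \<Longrightarrow> (T (2^n) x y = int D \<longleftrightarrow> (x,y) \<in> S)"
    and sub: "S \<subseteq> tri_vertices n"
  shows "N_A n = card S"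
proof -
  let ?V = "tri_vertices n"
  have finV: "finite ?V" by (simp add: tri_vertices_def)
  have z: "(0,0) \<in> ?V" by (simp add: tri_vertices_def)
  have d0: "int (tri_dist n (0,0) v) = T (2^n) (fst v) (snd v)" if "v \<in> ?V" for v
  proof -
    have "fst v mod 2^n = fst v" "snd v mod 2^n = snd v" using that by (auto simp: tri_vertices_def)
    then show ?thesis using dist_eq[OF z that] by simp
  qed
  have diam: "tri_diam n = D"
    unfolding tri_diam_def
  proof (rule Max_eqI)
    have "{tri_dist n u v |u v. u \<in> ?V \<and> v \<in> ?V} \<subseteq> (\<lambda>(u,v). tri_dist n u v) ` (?V \<times> ?V)"
      by auto
    then show "finite {tri_dist n u v |u v. u \<in> ?V \<and> v \<in> ?V}"
      using finV by (meson finite_SigmaI finite_imageI finite_subset)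
  next
    fix d assume "d \<in> {tri_dist n u v |u v. u \<in> ?V \<and> v \<in> ?V}"
    then obtain u v where uv: "u \<in> ?V" "v \<in> ?V" "d = tri_dist n u v" by blast
    have p: "(0::int) < 2^n" by simp
    have "int d = T (2^n) ((fst v - fst u) mod 2^n) ((snd v - snd u) mod 2^n)"
      using dist_eq[OF uv(1,2)] uv(3) by simp
    also have "\<dots> \<le> int D" by (rule bound) (simp_all add: pos_mod_bound)
    finally show "d \<le> D" by simp
  next
    have w: "(xw,yw) \<in> ?V" using wit sub by blast
    then have "T (2^n) xw yw = int D" using char[of xw yw] wit by (auto simp: tri_vertices_def)
    then have "tri_dist n (0,0) (xw,yw) = D" using d0[OF w] by simp
    then show "D \<in> {tri_dist n u v |u v. u \<in> ?V \<and> v \<in> ?V}" using z w by blast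
  qed
  have "{v \<in> ?V. tri_dist n (0,0) v = tri_diam n} = S"
  proof (intro set_eqI iffI)
    fix v assume "v \<in> {v \<in> ?V. tri_dist n (0,0) v = tri_diam n}"
    then have v: "v \<in> ?V" "tri_dist n (0,0) v = D" using diam by auto
    then have "T (2^n) (fst v) (snd v) = int D" using d0[OF v(1)] v(2) by simp
    then show "v \<in> S" using char[of "fst v" "snd v"] v(1) by (auto simp: tri_vertices_def)
  next
    fix v assume vS: "v \<in> S"
    then have v: "v \<in> ?V" using sub by blast
    then have "T (2^n) (fst v) (snd v) = int D" using char[of "fst v" "snd v"] vS by (auto simp: tri_vertices_def)
    then have "tri_dist n (0,0) v = D" using d0[OF v] by simp
    then show "v \<in> {v \<in> ?V. tri_dist n (0,0) v = tri_diam n}" using v diam by simp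
  qed
  then show ?thesis by (simp add: N_A_def)
qed

lemma pow_mod3: "(2::int)^n mod 3 = (if even n then 1 else 2)"
proof (induction n)
  case 0 then show ?case by simp
next
  case (Suc n)
  have "(2::int)^Suc n mod 3 = (2 * (2^n mod 3)) mod 3" by (simp add: mod_mult_right_eq)
  then show ?case using Suc by auto
qed

lemma odd_case:
  assumes N: "(2::int)^n = 3*q+2" "q \<ge> 1"
  shows "N_A n = 6"
proof -
  let ?S = "{(q,2*q+1),(q+1,2*q+1),(q+1,2*q+2),(2*q+1,q),(2*q+1,q+1),(2*q+2,q+1)}"
  have "N_A n = card ?S"
  proof (rule NA_gen[where D="nat (2*q+1)" and xw=q and yw="2*q+1"])
    fix x y :: int assume r: "0 \<le> x" "x < 2^n" "0 \<le> y" "y < 2^n"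
    have "3 * T (2^n) x y \<le> 2 * 2^n" using T_bound r by blast
    then show "T (2^n) x y \<le> int (nat (2*q+1))" using N by simp
  next
    show "(q, 2*q+1) \<in> ?S" by simp
  next
    fix x y :: int assume r: "0 \<le> x" "x < 2^n" "0 \<le> y" "y < 2^n"
    show "T (2^n) x y = int (nat (2*q+1)) \<longleftrightarrow> (x,y) \<in> ?S"
      using char_odd[OF N(1) N(2)] r N by simp
  next
    show "?S \<subseteq> tri_vertices n" using N by (auto simp: tri_vertices_def)
  qed
  moreover have "card ?S = 6" using N(2) by simp
  ultimately show ?thesis by simp
qed

lemma even_case:
  assumes N: "(2::int)^n = 3*q+1" "q \<ge> 2"
  shows "N_A n = 12"
proof -
  let ?S = "{(q-1,2*q),(q,2*q),(q,2*q+1),(q+1,2*q),(q+1,2*q+1),(q+1,2*q+2),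
     (2*q,q-1),(2*q,q),(2*q+1,q),(2*q,q+1),(2*q+1,q+1),(2*q+2,q+1)}"
  have "N_A n = card ?S"
  proof (rule NA_gen[where D="nat (2*q)" and xw=q and yw="2*q"])
    fix x y :: int assume r: "0 \<le> x" "x < 2^n" "0 \<le> y" "y < 2^n"
    have "3 * T (2^n) x y \<le> 2 * 2^n" using T_bound r by blast
    then show "T (2^n) x y \<le> int (nat (2*q))" using N by simp
  next
    show "(q, 2*q) \<in> ?S" by simp
  next
    fix x y :: int assume r: "0 \<le> x" "x < 2^n" "0 \<le> y" "y < 2^n"
    show "T (2^n) x y = int (nat (2*q)) \<longleftrightarrow> (x,y) \<in> ?S"
      using char_even[OF N(1) N(2)] r N by simp
  next
    show "?S \<subseteq> tri_vertices n" using N by (auto simp: tri_vertices_def)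
  qed
  moreover have "card ?S = 12" using N(2) by simp
  ultimately show ?thesis by simp
qed

lemma case1: "N_A 1 = 3"
proof -
  have "N_A 1 = card {(0::int,1::int),(1,0),(1,1)}"
  proof (rule NA_gen[where D=1 and xw=0 and yw=1])
    fix x y :: int assume r: "0 \<le> x" "x < 2^1" "0 \<le> y" "y < 2^1"
    have "3 * T (2^1) x y \<le> 2 * 2^1" using T_bound r by blast
    then show "T (2^1) x y \<le> int 1" by simp
  next
    fix x y :: int assume r: "0 \<le> x" "x < 2^1" "0 \<le> y" "y < 2^1"
    then show "T (2^1) x y = int 1 \<longleftrightarrow> (x,y) \<in> {(0,1),(1,0),(1,1)}"
      using char_2[of x y] by simp
  qed (auto simp: tri_vertices_def)
  then show ?thesis by simp
qed

lemma case2: "N_A 2 = 9"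
proof -
  have "N_A 2 = card {(0::int,2::int),(1,2),(1,3),(2,0),(2,1),(2,2),(2,3),(3,1),(3,2)}"
  proof (rule NA_gen[where D=2 and xw=0 and yw=2])
    fix x y :: int assume r: "0 \<le> x" "x < 2^2" "0 \<le> y" "y < 2^2"
    have "3 * T (2^2) x y \<le> 2 * 2^2" using T_bound r by blast
    then show "T (2^2) x y \<le> int 2" by simp
  next
    fix x y :: int assume r: "0 \<le> x" "x < 2^2" "0 \<le> y" "y < 2^2"
    then show "T (2^2) x y = int 2 \<longleftrightarrow> (x,y) \<in> {(0,2),(1,2),(1,3),(2,0),(2,1),(2,2),(2,3),(3,1),(3,2)}"
      using char_4[of x y] by simp
  qed (auto simp: tri_vertices_def)
  then show ?thesis by simp
qed

theorem mainTheorem6: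
  shows "N_A 1 = 3 \<and> N_A 2 = 9 \<and>
    (\<forall>n::nat. n > 2 \<longrightarrow> N_A n = (if odd n then 6 else 12))"
proof (intro conjI allI impI)
  show "N_A 1 = 3" by (rule case1)
  show "N_A 2 = 9" by (rule case2)
next
  fix n :: nat assume n: "n > 2"
  define q where "q = (2::int)^n div 3"
  have dm: "(2::int)^n = 3*q + 2^n mod 3" unfolding q_def by simp
  have "(2::int)^3 \<le> 2^n" using n by (intro power_increasing) auto
  then have big: "(8::int) \<le> 2^n" by simp
  show "N_A n = (if odd n then 6 else 12)"
  proof (cases "even n")
    case True
    have "4 \<le> n" using n True by presburger
    then have "(2::int)^4 \<le> 2^n" by (intro power_increasing) auto
    then have "(16::int) \<le> 2^n" by simp
    moreover have e: "(2::int)^n = 3*q+1" using dm pow_mod3[of n] True by simp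
    ultimately have "q \<ge> 2" by linarith
    then show ?thesis using even_case[OF e] True by simp
  next
    case False
    have e: "(2::int)^n = 3*q+2" using dm pow_mod3[of n] False by simp
    then have "q \<ge> 1" using big by linarith
    then show ?thesis using odd_case[OF e] False by simp
  qed
qed

end
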